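(* Let $\Theta\subseteq\mathbb R^d$, suppose Assumptions 1 and 2 hold with constants $L,B>0$, and let $\mu$ be a distribution on $\mathcal Z$ with $z_{1:n}=(z_1,\dots,z_n)$ i.i.d. from $\mu$. Let $\varepsilon>0$, $T\in\{0,\dots,n\}$, let $\Phi_n$ be any set of maps $\mathcal Z^n\to\Theta$, and let $\Phi_{T,\varepsilon}$ be a finite set of maps $\mathcal Z^n\to\Theta$ each depending on at most $T$ samples, such that for every $x_{1:n}\in\mathcal Z^n$ and every $\psi\in\Phi_n$ there is $\phi\in\Phi_{T,\varepsilon}$ with $\|\psi(x_{1:n})-\phi(x_{1:n})\|\le\varepsilon$. Then with probability at least $1-\delta$, for all $\psi\in\Phi_n$, $$\left|\hat F(\psi(z_{1:n}))-F(\psi(z_{1:n}))\right|\le\frac{BT}{n}+B\sqrt{\frac{\log(2|\Phi_{T,\varepsilon}|/\delta)}{2n}}+2L\varepsilon.$$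
   Context: $F(\theta):=\mathbb E_{Z\sim\mu}[f(\theta;Z)]$, $\hat F(\theta):=\frac1n\sum_{i=1}^nf(\theta;z_i)$ for a loss $f:\Theta\times\mathcal Z\to\mathbb R$. Assumption 1 (constant $L$): there is $h_0:\Theta\to\mathbb R$ with $|f(\theta;z)-h_0(\theta)-(f(\theta';z)-h_0(\theta'))|\le L\|\theta-\theta'\|$ for all $\theta,\theta'\in\Theta$, $z$. Assumption 2 (constant $B$): $\sup_zf(\theta;z)-\inf_zf(\theta;z)\le B$ for all $\theta\in\Theta$. A map $\phi:\mathcal Z^n\to\Theta$ "depends on at most $T$ samples" if there is $\mathcal I\subseteq[n]$ with $|\mathcal I|\le T$ such that $\phi(x_1,\dots,x_n)=\phi(x_1',\dots,x_n')$ whenever $x_i=x_i'$ for all $i\in\mathcal I$. *)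

theory Defs
  imports "HOL-Probability.Probability"
begin

definition pop_risk :: "'z measure \<Rightarrow> ('a \<Rightarrow> 'z \<Rightarrow> real) \<Rightarrow> 'a \<Rightarrow> real" where
  "pop_risk \<mu> f \<theta> = (\<integral>z. f \<theta> z \<partial>\<mu>)"

definition emp_risk :: "nat \<Rightarrow> ('a \<Rightarrow> 'z \<Rightarrow> real) \<Rightarrow> (nat \<Rightarrow> 'z) \<Rightarrow> 'a \<Rightarrow> real" where
  "emp_risk n f zs \<theta> = (\<Sum>i<n. f \<theta> (zs i)) / real n"

abbreviation sample_space :: "nat \<Rightarrow> 'z set \<Rightarrow> (nat \<Rightarrow> 'z) set" where
  "sample_space n Z \<equiv> PiE {..<n} (\<lambda>_. Z)"

definition depends_on_at_most :: "nat \<Rightarrow> 'z set \<Rightarrow> nat \<Rightarrow> ((nat \<Rightarrow> 'z) \<Rightarrow> 'a) \<Rightarrow> bool" where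
  "depends_on_at_most n Z T \<phi> \<longleftrightarrow>
     (\<exists>I. I \<subseteq> {..<n} \<and> card I \<le> T \<and>
        (\<forall>x\<in>sample_space n Z. \<forall>x'\<in>sample_space n Z. (\<forall>i\<in>I. x i = x' i) \<longrightarrow> \<phi> x = \<phi> x'))"

definition assumption1 :: "'a::real_normed_vector set \<Rightarrow> 'z set \<Rightarrow> ('a \<Rightarrow> 'z \<Rightarrow> real) \<Rightarrow> real \<Rightarrow> bool" where
  "assumption1 \<Theta> Z f L \<longleftrightarrow> (\<exists>h0 :: 'a \<Rightarrow> real. \<forall>\<theta>\<in>\<Theta>. \<forall>\<theta>'\<in>\<Theta>. \<forall>z\<in>Z.
      \<bar>f \<theta> z - h0 \<theta> - (f \<theta>' z - h0 \<theta>')\<bar> \<le> L * norm (\<theta> - \<theta>'))"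

text \<open>Assumption 2 with constant B: sup_z f(theta;z) - inf_z f(theta;z) <= B, written pointwise.\<close>
definition assumption2 :: "'a set \<Rightarrow> 'z set \<Rightarrow> ('a \<Rightarrow> 'z \<Rightarrow> real) \<Rightarrow> real \<Rightarrow> bool" where
  "assumption2 \<Theta> Z f B \<longleftrightarrow> (\<forall>\<theta>\<in>\<Theta>. \<forall>z\<in>Z. \<forall>z'\<in>Z. f \<theta> z - f \<theta> z' \<le> B)"

end

theory Submission imports Defs begin


lemma carath_meas:
  fixes \<phi> :: "'m \<Rightarrow> 'a::euclidean_space" and v :: "'a \<Rightarrow> 'w \<Rightarrow> real"
  assumes phi: "\<phi> \<in> borel_measurable M" and phiT: "\<And>x. x \<in> space M \<Longrightarrow> \<phi> x \<in> \<Theta>"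
    and Y: "Y \<in> measurable M N"
    and v: "\<And>\<theta>. \<theta> \<in> \<Theta> \<Longrightarrow> v \<theta> \<in> borel_measurable N"
    and lip: "\<And>\<theta> \<theta>' w. \<theta> \<in> \<Theta> \<Longrightarrow> \<theta>' \<in> \<Theta> \<Longrightarrow> w \<in> space N \<Longrightarrow> \<bar>v \<theta> w - v \<theta>' w\<bar> \<le> K * norm (\<theta> - \<theta>')"
  shows "(\<lambda>x. v (\<phi> x) (Y x)) \<in> borel_measurable M"
proof (cases "space M = {}")
  case True
  then show ?thesis unfolding measurable_def by auto
next
  case False
  then have "\<Theta> \<noteq> {}" using phiT by blast
  obtain D where D: "countable D" "D \<subseteq> \<Theta>" "\<Theta> \<subseteq> closure D" using separable by blast
  with \<open>\<Theta> \<noteq> {}\<close> have "D \<noteq> {}" by auto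
  define e where "e = from_nat_into D"
  have eD: "e i \<in> D" for i using \<open>D \<noteq> {}\<close> by (simp add: e_def from_nat_into)
  have ex: "\<exists>i. dist (e i) \<theta> < r" if th: "\<theta> \<in> \<Theta>" and r: "r > 0" for \<theta> r
  proof -
    have "\<theta> \<in> closure D" using th D by auto
    then obtain d where "d \<in> D" "dist d \<theta> < r" using r by (metis closure_approachable)
    moreover have "d \<in> range e" using \<open>d \<in> D\<close> D(1) by (simp add: e_def range_from_nat_into \<open>D \<noteq> {}\<close>)
    ultimately show ?thesis by auto
  qed
  define g where "g k x = (LEAST i. dist (e i) (\<phi> x) < 1 / Suc k)" for k x
  define u where "u k x = v (e (g k x)) (Y x)" for k x
  have gm: "g k \<in> measurable M (count_space UNIV)" for k
    unfolding g_def by (intro measurable_Least borel_measurable_pred_less borel_measurable_dist measurable_const phi) auto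
  have um: "u k \<in> borel_measurable M" for k
    unfolding u_def
  proof (rule measurable_compose_countable[OF _ gm])
    fix i show "(\<lambda>x. v (e i) (Y x)) \<in> borel_measurable M"
      using measurable_comp[OF Y v[of "e i"]] eD D(2) by (auto simp: comp_def)
  qed
  have conv: "(\<lambda>k. u k x) \<longlonglongrightarrow> v (\<phi> x) (Y x)" if x: "x \<in> space M" for x
  proof -
    have gk: "dist (e (g k x)) (\<phi> x) < 1 / Suc k" for k
      unfolding g_def using ex[OF phiT[OF x], of "1 / Suc k"] by (auto intro: LeastI_ex)
    have Yx: "Y x \<in> space N" using Y x by (auto simp: measurable_def)
    have b: "norm (u k x - v (\<phi> x) (Y x)) \<le> \<bar>K\<bar> * (1 / Suc k)" for k
    proof -
      have "norm (u k x - v (\<phi> x) (Y x)) \<le> K * norm (e (g k x) - \<phi> x)"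
        unfolding u_def using lip[of "e (g k x)" "\<phi> x" "Y x"] eD D(2) phiT[OF x] Yx by auto
      also have "\<dots> \<le> \<bar>K\<bar> * norm (e (g k x) - \<phi> x)" by (simp add: mult_right_mono)
      also have "\<dots> \<le> \<bar>K\<bar> * (1 / Suc k)"
        using gk[of k] by (intro mult_left_mono) (auto simp: dist_norm)
      finally show ?thesis .
    qed
    have "(\<lambda>k. \<bar>K\<bar> * (1 / real (Suc k))) \<longlonglongrightarrow> \<bar>K\<bar> * 0"
      by (intro tendsto_mult tendsto_const) (rule LIMSEQ_inverse_real_of_nat[unfolded inverse_eq_divide])
    then have l0: "(\<lambda>k. \<bar>K\<bar> * (1 / real (Suc k))) \<longlonglongrightarrow> 0" by simp
    have "(\<lambda>k. u k x - v (\<phi> x) (Y x)) \<longlonglongrightarrow> 0"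
      by (rule Lim_null_comparison[OF always_eventually l0]) (use b in blast)
    then show ?thesis by (rule LIM_zero_cancel)
  qed
  show ?thesis by (rule borel_measurable_LIMSEQ_real[OF conv um])
qed



lemma indep_coords:
  assumes P: "prob_space \<mu>" and fin: "finite J" and ne: "J \<noteq> {}"
  shows "prob_space.indep_vars (PiM J (\<lambda>_. \<mu>)) (\<lambda>_. \<mu>) (\<lambda>j y. y j) J"
proof -
  interpret PJ: prob_space "PiM J (\<lambda>_. \<mu>)" by (intro prob_space_PiM P)
  have "distr (PiM J (\<lambda>_. \<mu>)) (PiM J (\<lambda>_. \<mu>)) (\<lambda>x. \<lambda>j\<in>J. x j) = PiM J (\<lambda>_. \<mu>)"
  proof -
    have "distr (PiM J (\<lambda>_. \<mu>)) (PiM J (\<lambda>_. \<mu>)) (\<lambda>x. \<lambda>j\<in>J. x j) = distr (PiM J (\<lambda>_. \<mu>)) (PiM J (\<lambda>_. \<mu>)) (\<lambda>x. x)"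
      by (intro distr_cong) (auto simp: space_PiM PiE_def extensional_def restrict_def fun_eq_iff)
    then show ?thesis by simp
  qed
  moreover have "PiM J (\<lambda>j. distr (PiM J (\<lambda>_. \<mu>)) \<mu> (\<lambda>y. y j)) = PiM J (\<lambda>_. \<mu>)"
    by (intro PiM_cong refl distr_PiM_component P) 
  ultimately show ?thesis
    by (subst PJ.indep_vars_iff_distr_eq_PiM'[OF ne]) (auto simp: measurable_component_singleton)
qed

lemma hoeff_fixed:
  fixes g :: "'z \<Rightarrow> real"
  assumes P: "prob_space \<mu>" and fin: "finite J" and ne: "J \<noteq> {}"
    and gm: "g \<in> borel_measurable \<mu>"
    and gb: "\<And>w w'. w \<in> space \<mu> \<Longrightarrow> w' \<in> space \<mu> \<Longrightarrow> g w - g w' \<le> B"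
    and B: "B > 0" and s: "s \<ge> 0"
  shows "measure (PiM J (\<lambda>_. \<mu>)) {y \<in> space (PiM J (\<lambda>_. \<mu>)). s \<le> \<bar>(\<Sum>j\<in>J. g (y j)) - real (card J) * (\<integral>w. g w \<partial>\<mu>)\<bar>}
          \<le> 2 * exp (-2 * s\<^sup>2 / (real (card J) * B\<^sup>2))"
proof -
  interpret M: prob_space \<mu> by (rule P)
  interpret PJ: prob_space "PiM J (\<lambda>_. \<mu>)" by (intro prob_space_PiM P)
  obtain w0 where w0: "w0 \<in> space \<mu>" using M.not_empty by blast
  define a where "a = Inf (g ` space \<mu>)"
  have bdd: "bdd_below (g ` space \<mu>)"
    using gb w0 by (intro bdd_belowI[of _ "g w0 - B"]) force
  have alow: "a \<le> g w" if "w \<in> space \<mu>" for w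
    unfolding a_def using bdd that by (intro cInf_lower) auto
  have aup: "g w \<le> a + B" if w: "w \<in> space \<mu>" for w
  proof -
    have "g w - B \<le> a" unfolding a_def
      using w0 gb[OF w] by (intro cInf_greatest) (auto simp: algebra_simps)
    then show ?thesis by simp
  qed
  have ind: "PJ.indep_vars (\<lambda>_. borel) (\<lambda>j y. g (y j)) J"
    by (rule PJ.indep_vars_compose2[OF indep_coords[OF P fin ne]]) (use gm in auto)
  interpret H: Hoeffding_ineq "PiM J (\<lambda>_. \<mu>)" J "\<lambda>j y. g (y j)" "\<lambda>_. a" "\<lambda>_. a + B" "\<Sum>j\<in>J. PJ.expectation (\<lambda>y. g (y j))"
  proof unfold_locales
    show "finite J" by (rule fin)
    show "PJ.indep_vars (\<lambda>_. borel) (\<lambda>j y. g (y j)) J" by (rule ind)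
    fix j assume j: "j \<in> J"
    show "AE x in PiM J (\<lambda>_. \<mu>). g (x j) \<in> {a..a + B}"
      using alow aup j by (intro AE_I2) (auto simp: space_PiM PiE_def Pi_def)
  qed
  have ex: "PJ.expectation (\<lambda>y. g (y j)) = (\<integral>w. g w \<partial>\<mu>)" if j: "j \<in> J" for j
  proof -
    have "(\<integral>w. g w \<partial>\<mu>) = (\<integral>w. g w \<partial>distr (PiM J (\<lambda>_. \<mu>)) \<mu> (\<lambda>y. y j))"
      by (simp add: distr_PiM_component[OF P j])
    also have "\<dots> = PJ.expectation (\<lambda>y. g (y j))"
      by (rule integral_distr) (use j gm in \<open>auto simp: measurable_component_singleton\<close>)
    finally show ?thesis by simp
  qed
  have mu: "(\<Sum>j\<in>J. PJ.expectation (\<lambda>y. g (y j))) = real (card J) * (\<integral>w. g w \<partial>\<mu>)"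
    using ex by simp
  have sq: "(\<Sum>j\<in>J. (a + B - a)\<^sup>2) = real (card J) * B\<^sup>2" by simp
  have pos: "(\<Sum>j\<in>J. (a + B - a)\<^sup>2) > 0" using fin ne B by (simp add: card_gt_0_iff)
  show ?thesis
    using H.Hoeffding_ineq_abs_ge[OF s pos] unfolding mu sq .
qed



lemma exp_calc:
  fixes m \<delta> B :: real and n k :: nat
  assumes m: "m \<ge> 1" and d: "0 < \<delta>" "\<delta> < 1" and k: "1 \<le> k" "k \<le> n" and B: "B > 0"
  shows "2 * exp (-2 * (real n * B * sqrt (ln (2 * m / \<delta>) / (2 * real n)))\<^sup>2 / (real k * B\<^sup>2)) \<le> \<delta> / m"
proof -
  define l where "l = ln (2 * m / \<delta>)"
  have q: "2 * m / \<delta> > 1" using m d by (simp add: field_simps)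
  then have l: "l > 0" unfolding l_def by simp
  have n: "real n \<ge> 1" using k by simp
  have "(real n * B * sqrt (l / (2 * real n)))\<^sup>2 = real n ^ 2 * B ^ 2 * (l / (2 * real n))"
    using l n by (simp add: power_mult_distrib)
  also have "\<dots> = real n * B ^ 2 * l / 2" using n by (simp add: power2_eq_square field_simps)
  finally have s2: "(real n * B * sqrt (l / (2 * real n)))\<^sup>2 = real n * B ^ 2 * l / 2" .
  have "-2 * (real n * B ^ 2 * l / 2) / (real k * B\<^sup>2) = - (real n / real k) * l"
    using B k by (simp add: field_simps)
  also have "\<dots> \<le> - l"
  proof -
    have "real n / real k \<ge> 1" using k by simp
    then have "1 * l \<le> (real n / real k) * l" using l by (intro mult_right_mono) auto
    then show ?thesis by simp
  qed
  finally have e: "-2 * (real n * B * sqrt (l / (2 * real n)))\<^sup>2 / (real k * B\<^sup>2) \<le> - l" unfolding s2 .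
  have "2 * exp (-2 * (real n * B * sqrt (l / (2 * real n)))\<^sup>2 / (real k * B\<^sup>2)) \<le> 2 * exp (- l)"
    using e by simp
  also have "exp (- l) = \<delta> / (2 * m)" unfolding l_def using q d m by (simp add: exp_minus exp_ln_iff)
  finally show ?thesis using m by (simp add: l_def)
qed

theorem theorem7:
  fixes \<Theta> :: "'a::euclidean_space set"
    and \<mu> :: "'z measure"
    and f :: "'a \<Rightarrow> 'z \<Rightarrow> real"
    and L B \<epsilon> \<delta> :: real
    and n T :: nat
    and \<Phi>n \<Phi>T :: "((nat \<Rightarrow> 'z) \<Rightarrow> 'a) set"
  assumes prob: "prob_space \<mu>"
    and f_meas: "\<And>\<theta>. \<theta> \<in> \<Theta> \<Longrightarrow> f \<theta> \<in> borel_measurable \<mu>"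
    and A1: "assumption1 \<Theta> (space \<mu>) f L"
    and A2: "assumption2 \<Theta> (space \<mu>) f B"
    and L_pos: "L > 0" and B_pos: "B > 0"
    and n_pos: "n \<ge> 1"
    and eps_pos: "\<epsilon> > 0"
    and delta_pos: "\<delta> > 0"
    and T_le: "T \<le> n"
    and \<Phi>n_maps: "\<And>\<psi> x. \<psi> \<in> \<Phi>n \<Longrightarrow> x \<in> sample_space n (space \<mu>) \<Longrightarrow> \<psi> x \<in> \<Theta>"
    and \<Phi>T_fin: "finite \<Phi>T"
    and \<Phi>T_maps: "\<And>\<phi> x. \<phi> \<in> \<Phi>T \<Longrightarrow> x \<in> sample_space n (space \<mu>) \<Longrightarrow> \<phi> x \<in> \<Theta>"
    and \<Phi>T_meas: "\<And>\<phi>. \<phi> \<in> \<Phi>T \<Longrightarrow> \<phi> \<in> borel_measurable (PiM {..<n} (\<lambda>_. \<mu>))"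
    and \<Phi>T_dep: "\<And>\<phi>. \<phi> \<in> \<Phi>T \<Longrightarrow> depends_on_at_most n (space \<mu>) T \<phi>"
    and cover: "\<And>x \<psi>. x \<in> sample_space n (space \<mu>) \<Longrightarrow> \<psi> \<in> \<Phi>n \<Longrightarrow>
                  \<exists>\<phi>\<in>\<Phi>T. norm (\<psi> x - \<phi> x) \<le> \<epsilon>"
  shows "\<exists>A \<in> sets (PiM {..<n} (\<lambda>_. \<mu>)).
           measure (PiM {..<n} (\<lambda>_. \<mu>)) A \<ge> 1 - \<delta> \<and>
           (\<forall>z\<in>A. \<forall>\<psi>\<in>\<Phi>n.
              \<bar>emp_risk n f z (\<psi> z) - pop_risk \<mu> f (\<psi> z)\<bar>
                \<le> B * real T / real n
                  + B * sqrt (ln (2 * real (card \<Phi>T) / \<delta>) / (2 * real n))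
                  + 2 * L * \<epsilon>)"
  
proof -
  interpret Mu: prob_space \<mu> by (rule prob)
  define M where "M = PiM {..<n} (\<lambda>_. \<mu>)"
  interpret PM: prob_space M unfolding M_def by (intro prob_space_PiM prob)
  have spM: "space M = sample_space n (space \<mu>)" by (simp add: M_def space_PiM)
  define F where "F = pop_risk \<mu> f"
  have Fdef: "F \<theta> = (\<integral>w. f \<theta> w \<partial>\<mu>)" for \<theta> by (simp add: F_def pop_risk_def)
  obtain w0 where w0: "w0 \<in> space \<mu>" using Mu.not_empty by blast
  have int: "integrable \<mu> (f \<theta>)" if th: "\<theta> \<in> \<Theta>" for \<theta>
  proof (rule Mu.integrable_const_bound[where B="\<bar>f \<theta> w0\<bar> + B"])
    show "f \<theta> \<in> borel_measurable \<mu>" by (rule f_meas[OF th])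
    have "norm (f \<theta> w) \<le> \<bar>f \<theta> w0\<bar> + B" if w: "w \<in> space \<mu>" for w
      using A2 th w w0 unfolding assumption2_def by (smt (verit) real_norm_def)
    then show "AE x in \<mu>. norm (f \<theta> x) \<le> \<bar>f \<theta> w0\<bar> + B" by (intro AE_I2) auto
  qed
  have rng: "\<bar>f \<theta> w - F \<theta>\<bar> \<le> B" if th: "\<theta> \<in> \<Theta>" and w: "w \<in> space \<mu>" for \<theta> w
  proof -
    have "F \<theta> \<le> f \<theta> w + B" unfolding Fdef
      using A2 th w unfolding assumption2_def
      by (intro Mu.integral_le_const int[OF th] AE_I2) (smt (verit))
    moreover have "f \<theta> w - B \<le> F \<theta>" unfolding Fdef
      using A2 th w unfolding assumption2_def
      by (intro Mu.integral_ge_const int[OF th] AE_I2) (smt (verit))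
    ultimately show ?thesis by linarith
  qed
  obtain h0 :: "'a \<Rightarrow> real" where h0: "\<And>\<theta> \<theta>' z. \<theta>\<in>\<Theta> \<Longrightarrow> \<theta>'\<in>\<Theta> \<Longrightarrow> z\<in>space \<mu> \<Longrightarrow>
      \<bar>f \<theta> z - h0 \<theta> - (f \<theta>' z - h0 \<theta>')\<bar> \<le> L * norm (\<theta> - \<theta>')"
    using A1 unfolding assumption1_def by blast
  have lipv: "\<bar>(f \<theta> w - F \<theta>) - (f \<theta>' w - F \<theta>')\<bar> \<le> 2 * L * norm (\<theta> - \<theta>')"
    if th: "\<theta> \<in> \<Theta>" "\<theta>' \<in> \<Theta>" and w: "w \<in> space \<mu>" for \<theta> \<theta>' w
  proof -
    define D where "D w = f \<theta> w - h0 \<theta> - (f \<theta>' w - h0 \<theta>')" for w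
    define c where "c = L * norm (\<theta> - \<theta>')"
    have Db: "\<bar>D w\<bar> \<le> c" if "w \<in> space \<mu>" for w using h0[OF th that] by (simp add: D_def c_def)
    have Dint: "integrable \<mu> D" unfolding D_def using int[OF th(1)] int[OF th(2)] by auto
    have iD: "(\<integral>w. D w \<partial>\<mu>) = F \<theta> - h0 \<theta> - (F \<theta>' - h0 \<theta>')"
      unfolding D_def Fdef using int[OF th(1)] int[OF th(2)] by (simp add: Mu.prob_space)
    have "(\<integral>w. D w \<partial>\<mu>) \<le> c"
    proof (intro Mu.integral_le_const Dint AE_I2)
      fix w assume "w \<in> space \<mu>" then show "D w \<le> c" using Db[of w] by linarith
    qed
    moreover have "- c \<le> (\<integral>w. D w \<partial>\<mu>)"
    proof (intro Mu.integral_ge_const Dint AE_I2)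
      fix w assume "w \<in> space \<mu>" then show "- c \<le> D w" using Db[of w] by linarith
    qed
    ultimately have "\<bar>D w - (\<integral>w. D w \<partial>\<mu>)\<bar> \<le> 2 * c" using Db[OF w] by linarith
    moreover have "D w - (\<integral>w. D w \<partial>\<mu>) = (f \<theta> w - F \<theta>) - (f \<theta>' w - F \<theta>')"
      unfolding iD by (simp add: D_def)
    ultimately show ?thesis by (simp add: c_def)
  qed
  have empF: "emp_risk n f z \<theta> - F \<theta> = (\<Sum>i<n. (f \<theta> (z i) - F \<theta>)) / real n" for z \<theta>
    using n_pos by (simp add: emp_risk_def sum_subtractf field_simps)
  have lipemp: "\<bar>(emp_risk n f z \<theta>' - F \<theta>') - (emp_risk n f z \<theta> - F \<theta>)\<bar> \<le> 2 * L * norm (\<theta>' - \<theta>)"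
    if th: "\<theta> \<in> \<Theta>" "\<theta>' \<in> \<Theta>" and z: "z \<in> space M" for \<theta> \<theta>' z
  proof -
    have zi: "z i \<in> space \<mu>" if "i < n" for i using z that by (auto simp: spM PiE_def Pi_def)
    have "(emp_risk n f z \<theta>' - F \<theta>') - (emp_risk n f z \<theta> - F \<theta>)
        = (\<Sum>i<n. ((f \<theta>' (z i) - F \<theta>') - (f \<theta> (z i) - F \<theta>))) / real n"
      unfolding empF by (simp add: sum_subtractf diff_divide_distrib)
    also have "\<bar>\<dots>\<bar> \<le> (\<Sum>i<n. \<bar>(f \<theta>' (z i) - F \<theta>') - (f \<theta> (z i) - F \<theta>)\<bar>) / real n"
      by (simp add: divide_right_mono sum_abs)
    also have "\<dots> \<le> (\<Sum>i<n. 2 * L * norm (\<theta>' - \<theta>)) / real n"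
      using lipv[OF th(2) th(1) zi] by (intro divide_right_mono sum_mono) auto
    also have "\<dots> = 2 * L * norm (\<theta>' - \<theta>)" using n_pos by simp
    finally show ?thesis .
  qed
  show ?thesis
  proof (cases "\<delta> \<ge> 1")
    case True
    show ?thesis by (rule bexI[of _ "{}"]) (use True in auto)
  next
    case False
    then have d1: "\<delta> < 1" by simp
    have "\<forall>\<phi>\<in>\<Phi>T. \<exists>I. I \<subseteq> {..<n} \<and> card I \<le> T \<and>
        (\<forall>x\<in>sample_space n (space \<mu>). \<forall>x'\<in>sample_space n (space \<mu>). (\<forall>i\<in>I. x i = x' i) \<longrightarrow> \<phi> x = \<phi> x')"
      using \<Phi>T_dep unfolding depends_on_at_most_def by blast
    then obtain Ix where Ix: "\<And>\<phi>. \<phi> \<in> \<Phi>T \<Longrightarrow> Ix \<phi> \<subseteq> {..<n} \<and> card (Ix \<phi>) \<le> T \<and>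
        (\<forall>x\<in>sample_space n (space \<mu>). \<forall>x'\<in>sample_space n (space \<mu>). (\<forall>i\<in>Ix \<phi>. x i = x' i) \<longrightarrow> \<phi> x = \<phi> x')"
      by metis
    define J where "J \<phi> = {..<n} - Ix \<phi>" for \<phi>
    define m where "m = real (card \<Phi>T)"
    define s where "s = real n * B * sqrt (ln (2 * m / \<delta>) / (2 * real n))"
    define bad where "bad \<phi> = {z \<in> space M. s < \<bar>\<Sum>j\<in>J \<phi>. (f (\<phi> z) (z j) - F (\<phi> z))\<bar>}" for \<phi>
    have phiT: "\<phi> z \<in> \<Theta>" if "\<phi> \<in> \<Phi>T" "z \<in> space M" for \<phi> z
      using \<Phi>T_maps that spM by auto
    have badm: "bad \<phi> \<in> sets M" if ph: "\<phi> \<in> \<Phi>T" for \<phi>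
    proof -
      have "(\<lambda>z. f (\<phi> z) (z j) - F (\<phi> z)) \<in> borel_measurable M" if j: "j \<in> J \<phi>" for j
      proof (rule carath_meas[where v="\<lambda>\<theta> w. f \<theta> w - F \<theta>" and N=\<mu> and \<Theta>=\<Theta> and K="2*L"])
        show "\<phi> \<in> borel_measurable M" using \<Phi>T_meas[OF ph] by (simp add: M_def)
        show "\<phi> x \<in> \<Theta>" if "x \<in> space M" for x using phiT[OF ph that] .
        show "(\<lambda>z. z j) \<in> M \<rightarrow>\<^sub>M \<mu>" using j unfolding M_def J_def
          by (intro measurable_component_singleton) auto
        show "(\<lambda>w. f \<theta> w - F \<theta>) \<in> borel_measurable \<mu>" if "\<theta> \<in> \<Theta>" for \<theta>
          using f_meas[OF that] by measurable
        show "\<bar>f \<theta> w - F \<theta> - (f \<theta>' w - F \<theta>')\<bar> \<le> 2 * L * norm (\<theta> - \<theta>')"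
          if "\<theta> \<in> \<Theta>" "\<theta>' \<in> \<Theta>" "w \<in> space \<mu>" for \<theta> \<theta>' w using lipv[OF that] .
      qed
      then have "(\<lambda>z. \<bar>\<Sum>j\<in>J \<phi>. (f (\<phi> z) (z j) - F (\<phi> z))\<bar>) \<in> borel_measurable M"
        by (intro borel_measurable_abs borel_measurable_sum) auto
      then show ?thesis unfolding bad_def by (intro borel_measurable_less measurable_const) auto
    qed
    have badp: "measure M (bad \<phi>) \<le> \<delta> / m" if ph: "\<phi> \<in> \<Phi>T" for \<phi>
    proof -
      have m1: "m \<ge> 1" using ph \<Phi>T_fin by (auto simp: m_def Suc_le_eq card_gt_0_iff)
      have lpos: "ln (2 * m / \<delta>) > 0" using m1 d1 delta_pos by (simp add: field_simps)
      have s0: "s \<ge> 0" unfolding s_def using lpos B_pos by simp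
      define I where "I = Ix \<phi>"
      have I: "I \<subseteq> {..<n}" "card I \<le> T" using Ix[OF ph] by (auto simp: I_def)
      have dep: "\<And>x x'. x\<in>sample_space n (space \<mu>) \<Longrightarrow> x'\<in>sample_space n (space \<mu>) \<Longrightarrow> (\<forall>i\<in>I. x i = x' i) \<Longrightarrow> \<phi> x = \<phi> x'"
        using Ix[OF ph] unfolding I_def by blast
      define Jp where "Jp = J \<phi>"
      have IJ: "I \<inter> Jp = {}" "I \<union> Jp = {..<n}" "finite I" "finite Jp"
        using I(1) finite_subset[OF I(1)] by (auto simp: Jp_def J_def I_def)
      show ?thesis
      proof (cases "Jp = {}")
        case True
        then have "bad \<phi> = {}" using s0 by (auto simp: bad_def Jp_def)
        then show ?thesis using delta_pos m1 by simp
      next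
        case Jne: False
        interpret PS: product_sigma_finite "\<lambda>_::nat. \<mu>"
          by (simp add: product_sigma_finite_def prob_space_imp_sigma_finite prob)
        interpret PI: prob_space "PiM I (\<lambda>_. \<mu>)" by (intro prob_space_PiM prob)
        interpret PJ: prob_space "PiM Jp (\<lambda>_. \<mu>)" by (intro prob_space_PiM prob)
        have MIJ: "M = PiM (I \<union> Jp) (\<lambda>_. \<mu>)" unfolding M_def IJ(2) ..
        have inner: "(\<integral>\<^sup>+ y. indicator (bad \<phi>) (merge I Jp (x, y)) \<partial>PiM Jp (\<lambda>_. \<mu>)) \<le> ennreal (\<delta> / m)"
          if x: "x \<in> space (PiM I (\<lambda>_. \<mu>))" for x
        proof -
          obtain y0 where y0: "y0 \<in> space (PiM Jp (\<lambda>_. \<mu>))" using PJ.not_empty by blast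
          have xP: "x \<in> Pi I (\<lambda>_. space \<mu>)" using x by (simp add: space_PiM PiE_def)
          have mem: "merge I Jp (x, y) \<in> sample_space n (space \<mu>)" if y: "y \<in> space (PiM Jp (\<lambda>_. \<mu>))" for y
          proof -
            have "y \<in> Pi Jp (\<lambda>_. space \<mu>)" using y by (simp add: space_PiM PiE_def)
            then have "merge I Jp (x, y) \<in> PiE (I \<union> Jp) (\<lambda>_. space \<mu>)" using xP IJ(1) by simp
            then show ?thesis unfolding IJ(2) .
          qed
          define \<theta> where "\<theta> = \<phi> (merge I Jp (x, y0))"
          have th: "\<theta> \<in> \<Theta>" unfolding \<theta>_def by (rule \<Phi>T_maps[OF ph mem[OF y0]])
          have eqp: "\<phi> (merge I Jp (x, y)) = \<theta>" if y: "y \<in> space (PiM Jp (\<lambda>_. \<mu>))" for y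
            unfolding \<theta>_def by (rule dep[OF mem[OF y] mem[OF y0]]) (simp add: IJ(1))
          have fm[measurable]: "f \<theta> \<in> borel_measurable \<mu>" by (rule f_meas[OF th])
          define S' where "S' = {y \<in> space (PiM Jp (\<lambda>_. \<mu>)). s \<le> \<bar>(\<Sum>j\<in>Jp. f \<theta> (y j)) - real (card Jp) * (\<integral>w. f \<theta> w \<partial>\<mu>)\<bar>}"
          have hm: "(\<lambda>y. \<bar>(\<Sum>j\<in>Jp. f \<theta> (y j)) - real (card Jp) * (\<integral>w. f \<theta> w \<partial>\<mu>)\<bar>) \<in> borel_measurable (PiM Jp (\<lambda>_. \<mu>))"
            by measurable
          have S'm: "S' \<in> sets (PiM Jp (\<lambda>_. \<mu>))"
            unfolding S'_def by (intro borel_measurable_le[OF measurable_const hm]) auto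
          have le: "indicator (bad \<phi>) (merge I Jp (x, y)) \<le> (indicator S' y :: ennreal)"
            if y: "y \<in> space (PiM Jp (\<lambda>_. \<mu>))" for y
          proof -
            have "(\<Sum>j\<in>Jp. f \<theta> (merge I Jp (x, y) j) - F \<theta>) = (\<Sum>j\<in>Jp. f \<theta> (y j) - F \<theta>)"
              by (rule sum.cong) (auto simp: IJ(1))
            also have "\<dots> = (\<Sum>j\<in>Jp. f \<theta> (y j)) - real (card Jp) * (\<integral>w. f \<theta> w \<partial>\<mu>)"
              by (simp add: sum_subtractf Fdef)
            finally have eq: "(\<Sum>j\<in>Jp. f \<theta> (merge I Jp (x, y) j) - F \<theta>) = (\<Sum>j\<in>Jp. f \<theta> (y j)) - real (card Jp) * (\<integral>w. f \<theta> w \<partial>\<mu>)" .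
            have "y \<in> S'" if "merge I Jp (x, y) \<in> bad \<phi>"
            proof -
              have "s < \<bar>\<Sum>j\<in>Jp. f (\<phi> (merge I Jp (x, y))) (merge I Jp (x, y) j) - F (\<phi> (merge I Jp (x, y)))\<bar>"
                using that unfolding bad_def Jp_def by auto
              then have "s < \<bar>(\<Sum>j\<in>Jp. f \<theta> (y j)) - real (card Jp) * (\<integral>w. f \<theta> w \<partial>\<mu>)\<bar>"
                unfolding eqp[OF y] eq .
              then show ?thesis using y unfolding S'_def by auto
            qed
            then have "merge I Jp (x, y) \<in> bad \<phi> \<Longrightarrow> y \<in> S'" by blast
            then show ?thesis by (auto simp: indicator_def)
          qed
          have "(\<integral>\<^sup>+ y. indicator (bad \<phi>) (merge I Jp (x, y)) \<partial>PiM Jp (\<lambda>_. \<mu>)) \<le> (\<integral>\<^sup>+ y. indicator S' y \<partial>PiM Jp (\<lambda>_. \<mu>))"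
            using le by (intro nn_integral_mono) auto
          also have "\<dots> = emeasure (PiM Jp (\<lambda>_. \<mu>)) S'" using S'm by simp
          also have "\<dots> = ennreal (measure (PiM Jp (\<lambda>_. \<mu>)) S')" by (simp add: PJ.emeasure_eq_measure)
          also have "\<dots> \<le> ennreal (\<delta> / m)"
          proof (intro ennreal_leI)
            have gb: "f \<theta> w - f \<theta> w' \<le> B" if "w \<in> space \<mu>" "w' \<in> space \<mu>" for w w'
              using A2 th that unfolding assumption2_def by blast
            have k1: "1 \<le> card Jp" using IJ(4) Jne by (simp add: Suc_le_eq card_gt_0_iff)
            have k2: "card Jp \<le> n" using card_mono[of "{..<n}" Jp] IJ(2) by auto
            have "measure (PiM Jp (\<lambda>_. \<mu>)) S' \<le> 2 * exp (-2 * s\<^sup>2 / (real (card Jp) * B\<^sup>2))"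
              unfolding S'_def by (rule hoeff_fixed[OF prob IJ(4) Jne fm gb B_pos s0])
            also have "\<dots> \<le> \<delta> / m" unfolding s_def by (rule exp_calc[OF m1 delta_pos d1 k1 k2 B_pos])
            finally show "measure (PiM Jp (\<lambda>_. \<mu>)) S' \<le> \<delta> / m" .
          qed
          finally show ?thesis .
        qed
        have "emeasure M (bad \<phi>) = (\<integral>\<^sup>+ z. indicator (bad \<phi>) z \<partial>M)"
          using badm[OF ph] by simp
        also have "\<dots> = (\<integral>\<^sup>+ x. (\<integral>\<^sup>+ y. indicator (bad \<phi>) (merge I Jp (x, y)) \<partial>PiM Jp (\<lambda>_. \<mu>)) \<partial>PiM I (\<lambda>_. \<mu>))"
          unfolding MIJ using badm[OF ph] IJ by (intro PS.product_nn_integral_fold) (auto simp: MIJ)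
        also have "\<dots> \<le> (\<integral>\<^sup>+ x. ennreal (\<delta> / m) \<partial>PiM I (\<lambda>_. \<mu>))"
          using inner by (intro nn_integral_mono) auto
        also have "\<dots> = ennreal (\<delta> / m)" by (simp add: PI.emeasure_space_1)
        finally have "emeasure M (bad \<phi>) \<le> ennreal (\<delta> / m)" .
        then show ?thesis using delta_pos m1 by (simp add: PM.emeasure_eq_measure)
      qed
    qed
    define A where "A = space M - (\<Union>\<phi>\<in>\<Phi>T. bad \<phi>)"
    have Am: "A \<in> sets M" unfolding A_def using badm \<Phi>T_fin by auto
    have "measure M (\<Union>\<phi>\<in>\<Phi>T. bad \<phi>) \<le> (\<Sum>\<phi>\<in>\<Phi>T. measure M (bad \<phi>))"
      using badm \<Phi>T_fin by (intro PM.finite_measure_subadditive_finite) auto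
    also have "\<dots> \<le> (\<Sum>\<phi>\<in>\<Phi>T. \<delta> / m)" using badp by (intro sum_mono) auto
    also have "\<dots> \<le> \<delta>" using delta_pos by (cases "card \<Phi>T = 0") (auto simp: m_def)
    finally have mU: "measure M (\<Union>\<phi>\<in>\<Phi>T. bad \<phi>) \<le> \<delta>" .
    have mA: "measure M A \<ge> 1 - \<delta>"
      unfolding A_def using mU badm \<Phi>T_fin by (subst PM.prob_compl) auto
    have good: "\<bar>emp_risk n f z (\<psi> z) - pop_risk \<mu> f (\<psi> z)\<bar>
                \<le> B * real T / real n
                  + B * sqrt (ln (2 * real (card \<Phi>T) / \<delta>) / (2 * real n))
                  + 2 * L * \<epsilon>" if z: "z \<in> A" and ps: "\<psi> \<in> \<Phi>n" for z \<psi>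
    proof -
      have zM: "z \<in> space M" using z by (simp add: A_def)
      then have zss: "z \<in> sample_space n (space \<mu>)" by (simp add: spM)
      have zi: "z i \<in> space \<mu>" if "i < n" for i using zss that by (auto simp: PiE_def Pi_def)
      obtain \<phi> where ph: "\<phi> \<in> \<Phi>T" and nrm: "norm (\<psi> z - \<phi> z) \<le> \<epsilon>" using cover[OF zss ps] by blast
      define \<theta> where "\<theta> = \<phi> z"
      have th: "\<theta> \<in> \<Theta>" unfolding \<theta>_def using phiT[OF ph zM] .
      have th': "\<psi> z \<in> \<Theta>" using \<Phi>n_maps[OF ps zss] .
      define I where "I = Ix \<phi>"
      have I: "I \<subseteq> {..<n}" "card I \<le> T" using Ix[OF ph] by (auto simp: I_def)
      have nb: "z \<notin> bad \<phi>" using z ph by (auto simp: A_def)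
      have sJ: "\<bar>\<Sum>j\<in>J \<phi>. (f \<theta> (z j) - F \<theta>)\<bar> \<le> s" using nb zM by (auto simp: bad_def \<theta>_def)
      have sI: "\<bar>\<Sum>i\<in>I. (f \<theta> (z i) - F \<theta>)\<bar> \<le> real T * B"
      proof -
        have "\<bar>\<Sum>i\<in>I. (f \<theta> (z i) - F \<theta>)\<bar> \<le> (\<Sum>i\<in>I. \<bar>f \<theta> (z i) - F \<theta>\<bar>)" by (rule sum_abs)
        also have "\<dots> \<le> real (card I) * B"
          using rng[OF th zi] I(1) by (intro sum_bounded_above) auto
        also have "\<dots> \<le> real T * B" using I(2) B_pos by (intro mult_right_mono) auto
        finally show ?thesis .
      qed
      have split: "(\<Sum>i<n. (f \<theta> (z i) - F \<theta>)) = (\<Sum>j\<in>J \<phi>. (f \<theta> (z j) - F \<theta>)) + (\<Sum>i\<in>I. (f \<theta> (z i) - F \<theta>))"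
        unfolding J_def I_def[symmetric] using I(1) by (intro sum.subset_diff) auto
      have "\<bar>emp_risk n f z \<theta> - F \<theta>\<bar> = \<bar>\<Sum>i<n. (f \<theta> (z i) - F \<theta>)\<bar> / real n"
        unfolding empF by simp
      also have "\<dots> \<le> (s + real T * B) / real n"
        unfolding split using sJ sI by (intro divide_right_mono) auto
      also have "\<dots> = B * real T / real n + B * sqrt (ln (2 * real (card \<Phi>T) / \<delta>) / (2 * real n))"
        using n_pos by (simp add: s_def m_def field_simps)
      finally have e1: "\<bar>emp_risk n f z \<theta> - F \<theta>\<bar> \<le> B * real T / real n + B * sqrt (ln (2 * real (card \<Phi>T) / \<delta>) / (2 * real n))" .
      have e2: "\<bar>(emp_risk n f z (\<psi> z) - F (\<psi> z)) - (emp_risk n f z \<theta> - F \<theta>)\<bar> \<le> 2 * L * \<epsilon>"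
      proof -
        have "\<bar>(emp_risk n f z (\<psi> z) - F (\<psi> z)) - (emp_risk n f z \<theta> - F \<theta>)\<bar> \<le> 2 * L * norm (\<psi> z - \<theta>)"
          by (rule lipemp[OF th th' zM])
        also have "\<dots> \<le> 2 * L * \<epsilon>" using nrm L_pos unfolding \<theta>_def by (intro mult_left_mono) auto
        finally show ?thesis .
      qed
      show ?thesis using e1 e2 unfolding F_def by linarith
    qed
    show ?thesis
      by (rule bexI[of _ A]) (use mA good Am in \<open>auto simp: M_def\<close>)
  qed
qed

end
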